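(* Under Algorithm 2(a) below, let $Q(t)$ be the size of the sender's queue after the arrivals in slot $t$ have been appended (end of Step 3). Then $$Q(t)=\dim V(t)-\dim V_\Delta(t),$$ where $V(t)=\mathbb{F}_q^{A(t)}$ with $A(t)$ the total number of arrivals up to and including slot $t$, and $V_\Delta(t)=\bigcap_{j=1}^nV_j(t)$ with $V_j(t)$ the knowledge space of receiver $j$ at the end of Step 3 of slot $t$.
   Context: Model: a sender broadcasts to $n$ receivers over a slotted packet erasure broadcast channel; packets are vectors over $\mathbb{F}_q$, indexed by arrival order; each slot some packets may arrive at the sender (just after the slot begins); the sender transmits at most one linear combination of its stored packets per slot; each receiver either receives it or suffers an erasure, and the sender learns via perfect feedback before the end of the slot which receivers received it. The knowledge space of a node is the space of global coefficient vectors (with respect to all original packets arrived so far) of linear combinations it can compute. Algorithm 2(a) (field size $q>n$): The sender stores queue contents $\mathbf{y}_1,\dots,\mathbf{y}_Q$ and matrices $B,B_1,\dots,B_n$ with $Q$ columns whose rows are local coefficient vectors (with respect to the current queue contents); initially all empty. In every slot: (Step 3) if $a$ packets arrive, append them to the queue, set $B=I_Q$ for the new $Q$, append $a$ zero columns to each $B_j$. (Step 4) If the queue is nonempty, choose $\mathbf{g}\in\mathrm{span}(B)$ with $\mathbf{g}\notin\mathrm{span}(B_j)$ for every $j$ with $\mathrm{span}(B_j)\neq\mathrm{span}(B)$ (row spaces), transmit $\sum_i g_i\mathbf{y}_i$; else $\mathbf{g}=\mathbf{0}$, transmit nothing. (Step 5) If $\mathbf{g}\ne\mathbf{0}$ and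 receiver $j$ received it, append $\mathbf{g}$ as a row of $B_j$. (Step 6) $B_\Delta$: a basis of $\bigcap_j\mathrm{span}(B_j)$; $B'$: completion of $B_\Delta$ to a basis of $\mathrm{span}(B)$, $B''=B'\setminus B_\Delta$; $B_j'$: completion of $B_\Delta$ to a basis of $\mathrm{span}(B_j)$ with $B_j'':=B_j'\setminus B_\Delta\subseteq\mathrm{span}(B'')$. (Step 7) Replace the queue by $\sum_i h_i\mathbf{y}_i$, $\mathbf{h}\in B''$. (Step 8) Replace $B_j$ by $X_j$ where $B_j''=X_jB''$; set $B=I_{|B''|}$. *)

theory Defs
  imports Main HOL.Vector_Spaces "HOL-Library.Function_Algebras"
begin

text \<open>Vectors over the field 'a (global or local coefficient vectors) are represented as
  finitely supported functions nat => 'a; a vector of F_q^m is one vanishing from index m on.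
  Appending zero columns to a matrix is then automatic.\<close>

definition sc :: "'a::field \<Rightarrow> (nat \<Rightarrow> 'a) \<Rightarrow> (nat \<Rightarrow> 'a)" where
  "sc c v = (\<lambda>i. c * v i)"

interpretation fv: vector_space "sc :: 'a::field \<Rightarrow> (nat \<Rightarrow> 'a) \<Rightarrow> (nat \<Rightarrow> 'a)"
  by unfold_locales (auto simp: sc_def algebra_simps fun_eq_iff)

definition unitv :: "nat \<Rightarrow> nat \<Rightarrow> 'a::field" where
  "unitv i = (\<lambda>k. if k = i then 1 else 0)"

definition lincomb :: "(nat \<Rightarrow> 'a::field) \<Rightarrow> (nat \<Rightarrow> 'a) list \<Rightarrow> (nat \<Rightarrow> 'a)" where
  "lincomb g ys = (\<lambda>k. \<Sum>i<length ys. g i * (ys ! i) k)"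

definition Fspace :: "nat \<Rightarrow> (nat \<Rightarrow> 'a::field) set" where
  "Fspace m = {v. \<forall>i\<ge>m. v i = 0}"

text \<open>Sender/receiver state.  queue: global coefficient vectors of y_1..y_Q;
  bB, bBj j: rows of B, B_j (local coefficient vectors);
  rcv j: global coefficient vectors of all packets received so far by receiver j;
  arr: number of packets arrived so far.\<close>
record 'a state =
  arr :: nat
  queue :: "(nat \<Rightarrow> 'a) list"
  bB :: "(nat \<Rightarrow> 'a) list"
  bBj :: "nat \<Rightarrow> (nat \<Rightarrow> 'a) list"
  rcv :: "nat \<Rightarrow> (nat \<Rightarrow> 'a) set"

definition init_state :: "'a::field state" where
  "init_state = \<lparr>arr = 0, queue = [], bB = [], bBj = (\<lambda>j. []), rcv = (\<lambda>j. {})\<rparr>"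

definition know :: "'a::field state \<Rightarrow> nat \<Rightarrow> (nat \<Rightarrow> 'a) set" where
  "know s j = fv.span (rcv s j)"

definition arrive :: "nat \<Rightarrow> 'a::field state \<Rightarrow> 'a state" where
  "arrive a s = s\<lparr> arr := arr s + a,
                   queue := queue s @ map (\<lambda>k. unitv (arr s + k)) [0..<a],
                   bB := map unitv [0..<length (queue s) + a] \<rparr>"

text \<open>Steps 4--8 of a slot for n receivers (indexed 0..n-1), as a relation between the
  state after Step 3 and the state at the end of the slot; all choices of the algorithm
  (g, bases) and the erasure pattern (set R of receivers that received) are arbitrary.\<close>
definition slot_rest :: "nat \<Rightarrow> 'a::field state \<Rightarrow> 'a state \<Rightarrow> bool" where
  "slot_rest n s s' \<longleftrightarrow>
    (\<exists>g R bD bpp bjpp X.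
      (if queue s \<noteq> []
       then g \<in> fv.span (set (bB s)) \<and>
            (\<forall>j<n. fv.span (set (bBj s j)) \<noteq> fv.span (set (bB s))
                     \<longrightarrow> g \<notin> fv.span (set (bBj s j)))
       else g = 0) \<and>
      R \<subseteq> {..<n} \<and>
      (let Bj1 = (\<lambda>j. if g \<noteq> 0 \<and> j \<in> R then bBj s j @ [g] else bBj s j);
           rcv1 = (\<lambda>j. if g \<noteq> 0 \<and> j \<in> R then insert (lincomb g (queue s)) (rcv s j)
                        else rcv s j)
       in distinct bD \<and> fv.independent (set bD) \<and>
          fv.span (set bD) = (\<Inter>j<n. fv.span (set (Bj1 j))) \<and>
          distinct (bD @ bpp) \<and> fv.independent (set (bD @ bpp)) \<and>
          fv.span (set (bD @ bpp)) = fv.span (set (bB s)) \<and>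
          (\<forall>j<n. distinct (bD @ bjpp j) \<and> fv.independent (set (bD @ bjpp j)) \<and>
                 fv.span (set (bD @ bjpp j)) = fv.span (set (Bj1 j)) \<and>
                 set (bjpp j) \<subseteq> fv.span (set bpp) \<and>
                 map (\<lambda>x. lincomb x bpp) (X j) = bjpp j \<and>
                 (\<forall>x\<in>set (X j). x \<in> Fspace (length bpp))) \<and>
          s' = s\<lparr> queue := map (\<lambda>h. lincomb h (queue s)) bpp,
                  bB := map unitv [0..<length bpp],
                  bBj := X,
                  rcv := rcv1 \<rparr>))"

end

theory Submission
  imports Defs
begin


abbreviation lc where "lc \<equiv> lincomb"

lemma lc_Nil[simp]: "lincomb c [] = 0"
  by (simp add: lincomb_def fun_eq_iff)

lemma lc_Cons: "lincomb c (v#vs) = sc (c 0) v + lincomb (\<lambda>i. c (Suc i)) vs"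
  unfolding lincomb_def sc_def fun_eq_iff length_Cons sum.lessThan_Suc_shift by simp

lemma lc_append: "lincomb c (xs@ys) = lincomb c xs + lincomb (\<lambda>i. c (i + length xs)) ys"
proof (induction xs arbitrary: c)
  case Nil then show ?case by simp
next
  case (Cons x xs) then show ?case by (simp add: lc_Cons add.assoc)
qed

lemma lc_cong: "(\<And>i. i < length vs \<Longrightarrow> c i = d i) \<Longrightarrow> lincomb c vs = lincomb d vs"
  by (simp add: lincomb_def)

lemma lc_add: "lincomb (\<lambda>i. c i + d i) vs = lincomb c vs + lincomb d vs"
  by (simp add: lincomb_def fun_eq_iff algebra_simps sum.distrib)

lemma lc_diff: "lincomb (\<lambda>i. c i - d i) vs = lincomb c vs - lincomb d vs"
  by (simp add: lincomb_def fun_eq_iff algebra_simps sum_subtractf)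

lemma lc_scale: "lincomb (\<lambda>i. k * c i) vs = sc k (lincomb c vs)"
  by (simp add: lincomb_def fun_eq_iff sc_def sum_distrib_left algebra_simps)

lemma lc_zero: "lincomb (\<lambda>i. 0) vs = 0"
  by (simp add: lincomb_def fun_eq_iff)

definition joinc :: "nat \<Rightarrow> (nat \<Rightarrow> 'a) \<Rightarrow> (nat \<Rightarrow> 'a) \<Rightarrow> nat \<Rightarrow> 'a" where
  "joinc k c e = (\<lambda>i. if i < k then c i else e (i - k))"

lemma lc_join: "lincomb (joinc (length xs) c e) (xs@ys) = lincomb c xs + lincomb e ys"
  unfolding lc_append
  by (rule arg_cong2[where f="(+)"]; rule lc_cong; simp add: joinc_def)

lemma lc_map: "lincomb c (map (\<lambda>x. lincomb x vs) ws) = lincomb (lincomb c ws) vs"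
  unfolding lincomb_def
  by (auto simp: fun_eq_iff sum_distrib_left sum_distrib_right algebra_simps intro: sum.swap)

lemma lc_nth: "i < length vs \<Longrightarrow> lincomb (unitv i) vs = vs ! i"
proof -
  assume i: "i < length vs"
  have "\<And>k. (\<Sum>j<length vs. unitv i j * (vs ! j) k) = (vs ! i) k"
  proof -
    fix k
    have "(\<Sum>j<length vs. unitv i j * (vs ! j) k) = (\<Sum>j<length vs. if j = i then (vs ! j) k else 0)"
      by (rule sum.cong) (auto simp: unitv_def)
    then show "?thesis k" using i by simp
  qed
  then show ?thesis by (simp add: lincomb_def fun_eq_iff)
qed

lemma lc_units: "lincomb c (map unitv [0..<m]) = (\<lambda>k. if k < m then c k else 0)"
  by (simp add: lincomb_def fun_eq_iff unitv_def if_distrib cong: if_cong)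

lemma lc_shift_units: "lincomb d (map (\<lambda>k. unitv (A + k)) [0..<a]) =
   (\<lambda>x. if A \<le> x \<and> x < A + a then d (x - A) else 0)"
proof -
  have "\<And>x. (\<Sum>i<a. d i * unitv (A + i) x) = (if A \<le> x \<and> x < A + a then d (x - A) else 0)"
  proof -
    fix x
    have "(\<Sum>i<a. d i * unitv (A + i) x) = (\<Sum>i\<in>{..<a}. if i = x - A \<and> A \<le> x then d i else 0)"
      by (rule sum.cong) (auto simp: unitv_def)
    also have "\<dots> = (if A \<le> x \<and> x < A + a then d (x - A) else 0)"
      by (auto simp: sum.delta' )
    finally show "?thesis x" .
  qed
  then show ?thesis by (simp add: lincomb_def fun_eq_iff)
qed


lemma span_set: "fv.span (set vs) = range (\<lambda>c. lincomb c vs)"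
proof (induction vs)
  case Nil then show ?case by (simp add: zero_fun_def)
next
  case (Cons v vs)
  have "fv.span (set (v#vs)) = {x. \<exists>k. x - sc k v \<in> fv.span (set vs)}"
    by (simp add: fv.span_insert)
  also have "\<dots> = range (\<lambda>c. lincomb c (v#vs))"
  proof safe
    fix x k assume "x - sc k v \<in> fv.span (set vs)"
    then obtain c where c: "x - sc k v = lincomb c vs" using Cons by auto
    show "x \<in> range (\<lambda>c. lincomb c (v#vs))"
      by (rule image_eqI[where x="\<lambda>i. case i of 0 \<Rightarrow> k | Suc j \<Rightarrow> c j"])
         (use c in \<open>auto simp: lc_Cons algebra_simps\<close>)
  next
    fix c
    show "\<exists>k. lincomb c (v#vs) - sc k v \<in> fv.span (set vs)"
      by (rule exI[of _ "c 0"]) (use Cons in \<open>simp add: lc_Cons\<close>)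
  qed
  finally show ?case .
qed

definition indep_list :: "(nat \<Rightarrow> 'a::field) list \<Rightarrow> bool" where
  "indep_list vs \<longleftrightarrow> (\<forall>c. lincomb c vs = 0 \<longrightarrow> (\<forall>i<length vs. c i = 0))"

lemma indep_Cons: "indep_list (v#vs) \<longleftrightarrow> indep_list vs \<and> v \<notin> range (\<lambda>c. lincomb c vs)"
proof (intro iffI conjI)
  assume h: "indep_list (v#vs)"
  show "indep_list vs"
    unfolding indep_list_def
  proof safe
    fix c i assume "lincomb c vs = 0" "i < length vs"
    then show "c i = 0"
      using h[unfolded indep_list_def, rule_format, of "\<lambda>i. case i of 0 \<Rightarrow> 0 | Suc j \<Rightarrow> c j" "Suc i"]
      by (simp add: lc_Cons sc_def zero_fun_def)
  qed
  show "v \<notin> range (\<lambda>c. lincomb c vs)"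
  proof
    assume "v \<in> range (\<lambda>c. lincomb c vs)"
    then obtain c where "v = lincomb c vs" by auto
    have "lincomb (\<lambda>i. case i of 0 \<Rightarrow> -1 | Suc j \<Rightarrow> c j) (v#vs) = 0"
      using \<open>v = _\<close> by (simp add: lc_Cons sc_def fun_eq_iff)
    then show False
      using h[unfolded indep_list_def, rule_format, of "\<lambda>i. case i of 0 \<Rightarrow> -1 | Suc j \<Rightarrow> c j" 0]
      by simp
  qed
next
  assume h0: "indep_list vs \<and> v \<notin> range (\<lambda>c. lincomb c vs)"
  from h0 have h: "indep_list vs" "v \<notin> range (\<lambda>c. lincomb c vs)" by auto
  show "indep_list (v#vs)"
    unfolding indep_list_def
  proof safe
    fix c i assume c: "lincomb c (v#vs) = 0" and i: "i < length (v#vs)"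
    have c0: "c 0 = 0"
    proof (rule ccontr)
      assume nz: "c 0 \<noteq> 0"
      have "sc (c 0) v = - lincomb (\<lambda>i. c (Suc i)) vs"
        using c by (simp add: lc_Cons eq_neg_iff_add_eq_0)
      then have "sc (inverse (c 0)) (sc (c 0) v) = lincomb (\<lambda>i. - inverse (c 0) * c (Suc i)) vs"
        by (simp add: lc_scale[symmetric] fun_eq_iff sc_def lincomb_def sum_negf sum_distrib_left mult.assoc)
      then have "v = lincomb (\<lambda>i. - inverse (c 0) * c (Suc i)) vs"
        using nz by (simp add: sc_def fun_eq_iff mult.assoc[symmetric])
      then show False using h(2) by blast
    qed
    then have "lincomb (\<lambda>i. c (Suc i)) vs = 0" using c by (simp add: lc_Cons sc_def zero_fun_def)
    then show "c i = 0" using h(1) c0 i unfolding indep_list_def by (cases i) auto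
  qed
qed

lemma indep_iff: "distinct vs \<and> fv.independent (set vs) \<longleftrightarrow> indep_list vs"
proof (induction vs)
  case Nil then show ?case by (simp add: indep_list_def fv.independent_empty)
next
  case (Cons v vs)
  show ?case
    unfolding indep_Cons Cons[symmetric] span_set[symmetric]
    using fv.span_superset[of "set vs"] by (auto simp: fv.independent_insert)
qed


lemma Fspace_lc: "set vs \<subseteq> Fspace m \<Longrightarrow> lincomb c vs \<in> Fspace m"
  unfolding Fspace_def lincomb_def
  by (auto intro!: sum.neutral) (metis (mono_tags, lifting) mem_Collect_eq nth_mem subsetD)

lemma Fspace_add: "u \<in> Fspace m \<Longrightarrow> v \<in> Fspace m \<Longrightarrow> u + v \<in> Fspace m"
  by (auto simp: Fspace_def)

lemma Fspace_diff: "u \<in> Fspace m \<Longrightarrow> v \<in> Fspace m \<Longrightarrow> u - v \<in> Fspace m"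
  by (auto simp: Fspace_def)

lemma Fspace_mono: "m \<le> k \<Longrightarrow> Fspace m \<subseteq> Fspace k"
  by (auto simp: Fspace_def)

lemma set_sub_range: "set vs \<subseteq> range (\<lambda>c. lincomb c vs)"
  by (auto simp: in_set_conv_nth lc_nth[symmetric])

lemma lc_Fspace_append: "b \<in> Fspace (length xs) \<Longrightarrow> lincomb b (xs@ys) = lincomb b xs"
proof -
  assume b: "b \<in> Fspace (length xs)"
  have "lincomb (\<lambda>i. b (i + length xs)) ys = lincomb (\<lambda>i. 0) ys"
    by (rule lc_cong) (use b in \<open>auto simp: Fspace_def\<close>)
  then show ?thesis by (simp add: lc_append lc_zero)
qed

lemma lc_trunc: "lincomb b xs = lincomb (\<lambda>i. if i < length xs then b i else 0) xs"
  by (rule lc_cong) simp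

lemma trunc_Fspace: "(\<lambda>i. if i < m then b i else 0) \<in> Fspace m"
  by (auto simp: Fspace_def)

lemma indep_prefix: "indep_list (xs@ys) \<Longrightarrow> indep_list xs"
  unfolding indep_list_def
proof safe
  fix c i assume h: "\<forall>c. lincomb c (xs @ ys) = 0 \<longrightarrow> (\<forall>i<length (xs @ ys). c i = 0)"
    and c: "lincomb c xs = 0" and i: "i < length xs"
  have "lincomb (joinc (length xs) c (\<lambda>i. 0)) (xs@ys) = 0"
    by (simp add: lc_join c lc_zero)
  then have "\<forall>i<length (xs@ys). joinc (length xs) c (\<lambda>i. 0) i = 0" using h by blast
  then have "joinc (length xs) c (\<lambda>i. 0) i = 0" using i by simp
  then show "c i = 0" using i by (simp add: joinc_def)
qed

lemma uniq_split:
  assumes "indep_list (Dl@Q)" "b \<in> Fspace (length Q)" "lincomb c Dl + lincomb b Q = 0"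
  shows "b = 0 \<and> (\<forall>i<length Dl. c i = 0)"
proof -
  have z: "lincomb (joinc (length Dl) c b) (Dl@Q) = 0" by (simp add: lc_join assms(3))
  have *: "\<forall>i<length Dl + length Q. joinc (length Dl) c b i = 0"
    using assms(1) z unfolding indep_list_def by auto
  have "b = 0"
  proof (rule ext)
    fix i show "b i = 0 i"
    proof (cases "i < length Q")
      case True then show ?thesis using *[rule_format, of "i + length Dl"] by (simp add: joinc_def)
    next
      case False then show ?thesis using assms(2) by (simp add: Fspace_def)
    qed
  qed
  moreover have "\<forall>i<length Dl. c i = 0"
  proof safe
    fix i assume "i < length Dl" then show "c i = 0" using *[rule_format, of i] by (simp add: joinc_def)
  qed
  ultimately show ?thesis by simp
qed

lemma G:
  assumes "range (\<lambda>c. lincomb c ws) \<subseteq> range (\<lambda>c. lincomb c vs)"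
  shows "range (\<lambda>c. lincomb c (Dl @ map (\<lambda>b. lincomb b Q) ws))
          \<subseteq> range (\<lambda>c. lincomb c (Dl @ map (\<lambda>b. lincomb b Q) vs))"
proof safe
  fix c
  have "lincomb c (Dl @ map (\<lambda>b. lincomb b Q) ws) = lincomb c Dl + lincomb (lincomb (\<lambda>i. c (i + length Dl)) ws) Q"
    by (simp add: lc_append lc_map)
  moreover obtain e where "lincomb (\<lambda>i. c (i + length Dl)) ws = lincomb e vs" using assms by blast
  ultimately have "lincomb c (Dl @ map (\<lambda>b. lincomb b Q) ws) = lincomb (joinc (length Dl) c e) (Dl @ map (\<lambda>b. lincomb b Q) vs)"
    by (simp add: lc_join lc_map)
  then show "lincomb c (Dl @ map (\<lambda>b. lincomb b Q) ws) \<in> range (\<lambda>c. lincomb c (Dl @ map (\<lambda>b. lincomb b Q) vs))"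
    by blast
qed

lemma map_L_units: "map (\<lambda>b. lincomb b Q) (map unitv [0..<length Q]) = Q"
  by (rule nth_equalityI) (auto simp: lc_nth)

lemma Fspace_units: "Fspace m = range (\<lambda>c. lincomb c (map unitv [0..<m]))"
proof safe
  fix v :: "nat \<Rightarrow> 'a" assume "v \<in> Fspace m"
  then have "v = lincomb v (map unitv [0..<m])" by (auto simp: lc_units Fspace_def fun_eq_iff)
  then show "v \<in> range (\<lambda>c. lincomb c (map unitv [0..<m]))" by blast
next
  fix c :: "nat \<Rightarrow> 'a"
  show "lincomb c (map unitv [0..<m]) \<in> Fspace m" by (simp add: lc_units Fspace_def)
qed

lemma indep_ext:
  assumes "indep_list (Dl@Q)" "set W \<subseteq> Fspace (length Q)" "indep_list W"
  shows "indep_list (Dl @ map (\<lambda>b. lincomb b Q) W)"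
  unfolding indep_list_def
proof (rule allI, rule impI)
  fix c assume c: "lincomb c (Dl @ map (\<lambda>b. lincomb b Q) W) = 0"
  then have "lincomb c Dl + lincomb (lincomb (\<lambda>i. c (i + length Dl)) W) Q = 0"
    by (simp add: lc_append lc_map)
  from uniq_split[OF assms(1) Fspace_lc[OF assms(2)] this]
  have 1: "lincomb (\<lambda>i. c (i + length Dl)) W = 0" and 2: "\<forall>i<length Dl. c i = 0" by auto
  from 1 assms(3) have 3: "\<forall>i<length W. c (i + length Dl) = 0" unfolding indep_list_def by auto
  show "\<forall>i<length (Dl @ map (\<lambda>b. lincomb b Q) W). c i = 0"
  proof (intro allI impI)
    fix i assume "i < length (Dl @ map (\<lambda>b. lincomb b Q) W)"
    then show "c i = 0" using 2 3[rule_format, of "i - length Dl"]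
      by (cases "i < length Dl") (auto simp: not_less)
  qed
qed

lemma indep_arr:
  assumes "indep_list P" "set P \<subseteq> Fspace A"
  shows "indep_list (P @ map (\<lambda>k. unitv (A+k)) [0..<a])"
  unfolding indep_list_def
proof (rule allI, rule impI)
  fix c assume c: "lincomb c (P @ map (\<lambda>k. unitv (A+k)) [0..<a]) = 0"
  let ?d = "\<lambda>i. c (i + length P)"
  have e: "lincomb c P + (\<lambda>x. if A \<le> x \<and> x < A + a then ?d (x - A) else 0) = 0"
    using c by (simp add: lc_append lc_shift_units)
  have d0: "\<forall>k<a. ?d k = 0"
  proof (intro allI impI)
    fix k assume k: "k < a"
    have "lincomb c P (A + k) = 0" using Fspace_lc[OF assms(2)] by (simp add: Fspace_def)
    then show "?d k = 0" using fun_cong[OF e, of "A + k"] k by simp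
  qed
  have "lincomb ?d (map (\<lambda>k. unitv (A+k)) [0..<a]) = lincomb (\<lambda>i. 0) (map (\<lambda>k. unitv (A+k)) [0..<a])"
    by (rule lc_cong) (use d0 in auto)
  then have "lincomb c P = 0" using c by (simp add: lc_append lc_zero)
  then have "\<forall>i<length P. c i = 0" using assms(1) unfolding indep_list_def by auto
  then show "\<forall>i<length (P @ map (\<lambda>k. unitv (A+k)) [0..<a]). c i = 0"
    using d0 by (metis add_diff_inverse_nat add.commute length_append length_map length_upt
          minus_nat.diff_0 nat_add_left_cancel_less)
qed

lemma span_arr:
  assumes "Fspace A = range (\<lambda>c. lincomb c P)"
  shows "Fspace (A + a) = range (\<lambda>c. lincomb c (P @ map (\<lambda>k. unitv (A+k)) [0..<a]))"
proof safe
  fix v :: "nat \<Rightarrow> 'a" assume v: "v \<in> Fspace (A + a)"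
  have "(\<lambda>i. if i < A then v i else 0) \<in> Fspace A" by (rule trunc_Fspace)
  then obtain c where c: "(\<lambda>i. if i < A then v i else 0) = lincomb c P" using assms by auto
  have "v = lincomb (joinc (length P) c (\<lambda>k. v (A + k))) (P @ map (\<lambda>k. unitv (A+k)) [0..<a])"
    unfolding lc_join lc_shift_units c[symmetric] using v by (auto simp: fun_eq_iff Fspace_def)
  then show "v \<in> range (\<lambda>c. lincomb c (P @ map (\<lambda>k. unitv (A+k)) [0..<a]))" by blast
next
  fix c
  have "lincomb c P \<in> Fspace A" using assms by auto
  then have "lincomb c P \<in> Fspace (A + a)" using Fspace_mono[of A "A+a"] by auto
  moreover have "lincomb (\<lambda>i. c (i + length P)) (map (\<lambda>k. unitv (A+k)) [0..<a]) \<in> Fspace (A + a)"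
    by (simp add: lc_shift_units Fspace_def)
  ultimately show "lincomb c (P @ map (\<lambda>k. unitv (A+k)) [0..<a]) \<in> Fspace (A + a)"
    by (simp add: lc_append Fspace_add)
qed


definition Inv :: "nat \<Rightarrow> 'a::field state \<Rightarrow> bool" where
 "Inv n s \<longleftrightarrow> (\<exists>Dl. indep_list (Dl @ queue s) \<and> Fspace (arr s) = range (\<lambda>c. lincomb c (Dl @ queue s)) \<and>
   (\<forall>j<n. know s j = range (\<lambda>c. lincomb c (Dl @ map (\<lambda>b. lincomb b (queue s)) (bBj s j)))) \<and>
   (\<forall>j<n. set (bBj s j) \<subseteq> Fspace (length (queue s))) \<and>
   (\<forall>b. (\<forall>j<n. b \<in> range (\<lambda>c. lincomb c (bBj s j))) \<longrightarrow> b = 0))"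

lemma dim_list: "indep_list vs \<Longrightarrow> fv.dim (range (\<lambda>c. lincomb c vs)) = length vs"
  using indep_iff[of vs] span_set[of vs] fv.dim_span_eq_card_independent[of "set vs"]
  by (simp add: distinct_card)

lemma Inv_final:
  fixes s :: "'a::field state"
  assumes "Inv n s" "n \<ge> 1"
  shows "length (queue s) = fv.dim (Fspace (arr s) :: (nat \<Rightarrow> 'a) set) - fv.dim (\<Inter>j<n. know s j)"
proof -
  obtain Dl where I1: "indep_list (Dl @ queue s)"
    and I2: "Fspace (arr s) = range (\<lambda>c. lincomb c (Dl @ queue s))"
    and I3: "\<forall>j<n. know s j = range (\<lambda>c. lincomb c (Dl @ map (\<lambda>b. lincomb b (queue s)) (bBj s j)))"
    and I4: "\<forall>j<n. set (bBj s j) \<subseteq> Fspace (length (queue s))"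
    and I5: "\<forall>b. (\<forall>j<n. b \<in> range (\<lambda>c. lincomb c (bBj s j))) \<longrightarrow> b = 0"
    using assms(1) unfolding Inv_def by (elim exE conjE) (rule that; assumption)
  define Q where "Q = queue s"
  have dec: "lincomb c (Dl @ map (\<lambda>b. lincomb b Q) ws) =
      lincomb c Dl + lincomb (lincomb (\<lambda>i. c (i + length Dl)) ws) Q" for c ws
    by (simp add: lc_append lc_map)
  have "(\<Inter>j<n. know s j) = range (\<lambda>c. lincomb c Dl)"
  proof
    show "range (\<lambda>c. lincomb c Dl) \<subseteq> (\<Inter>j<n. know s j)"
    proof safe
      fix c j assume j: "j < n"
      have "lincomb c Dl = lincomb (joinc (length Dl) c (\<lambda>i. 0)) (Dl @ map (\<lambda>b. lincomb b (queue s)) (bBj s j))"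
        by (simp add: lc_join lc_zero)
      then show "lincomb c Dl \<in> know s j" using I3 j by auto
    qed
  next
    show "(\<Inter>j<n. know s j) \<subseteq> range (\<lambda>c. lincomb c Dl)"
    proof
      fix v assume v: "v \<in> (\<Inter>j<n. know s j)"
      have ex: "\<exists>c e. v = lincomb c Dl + lincomb (lincomb e (bBj s j)) Q" if "j < n" for j
      proof -
        have "v \<in> know s j" using v that by blast
        then have "v \<in> range (\<lambda>c. lincomb c (Dl @ map (\<lambda>b. lincomb b Q) (bBj s j)))"
          using I3 that unfolding Q_def by simp
        then obtain c where "v = lincomb c (Dl @ map (\<lambda>b. lincomb b Q) (bBj s j))" by blast
        then show ?thesis using dec by blast
      qed
      from ex[of 0] assms(2) obtain c0 e0 where v0: "v = lincomb c0 Dl + lincomb (lincomb e0 (bBj s 0)) Q"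
        by auto
      define b0 where "b0 = lincomb e0 (bBj s 0)"
      have b0F: "b0 \<in> Fspace (length Q)" unfolding b0_def Q_def
        using Fspace_lc I4 assms(2) by (metis less_le_trans zero_less_one)
      have "\<forall>j<n. b0 \<in> range (\<lambda>c. lincomb c (bBj s j))"
      proof (intro allI impI)
        fix j assume j: "j < n"
        from ex[OF j] obtain c e where vj: "v = lincomb c Dl + lincomb (lincomb e (bBj s j)) Q" by auto
        define bj where "bj = lincomb e (bBj s j)"
        have bjF: "bj \<in> Fspace (length Q)" unfolding bj_def Q_def using Fspace_lc[OF I4[rule_format, OF j]] .
        have "lincomb (\<lambda>i. c i - c0 i) Dl + lincomb (\<lambda>i. bj i - b0 i) Q =
              (lincomb c Dl + lincomb bj Q) - (lincomb c0 Dl + lincomb b0 Q)"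
          unfolding lc_diff by (simp add: algebra_simps)
        also have "\<dots> = 0" using vj[folded bj_def] v0[folded b0_def] by simp
        finally have "lincomb (\<lambda>i. c i - c0 i) Dl + lincomb (\<lambda>i. bj i - b0 i) Q = 0" .
        from uniq_split[OF I1[folded Q_def] _ this] have "(\<lambda>i. bj i - b0 i) = 0"
          using Fspace_diff[OF bjF b0F] by (simp add: fun_diff_def)
        then have "b0 = bj" by (simp add: fun_eq_iff)
        then show "b0 \<in> range (\<lambda>c. lincomb c (bBj s j))" unfolding bj_def by blast
      qed
      with I5 have "b0 = 0" by blast
      then have "v = lincomb c0 Dl" using v0 unfolding b0_def[symmetric]
        by (simp add: zero_fun_def lc_zero)
      then show "v \<in> range (\<lambda>c. lincomb c Dl)" by blast
    qed
  qed
  then have "fv.dim (\<Inter>j<n. know s j) = length Dl"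
  proof -
    have "indep_list Dl" using indep_prefix I1 by blast
    then show ?thesis using \<open>(\<Inter>j<n. know s j) = _\<close> dim_list by simp
  qed
  moreover have "fv.dim (Fspace (arr s) :: (nat \<Rightarrow> 'a) set) = length Dl + length (queue s)"
    unfolding I2 using dim_list[OF I1] by simp
  ultimately show ?thesis by simp
qed


lemma range_Nil: "range (\<lambda>c. lincomb c []) = {0}"
  by auto

lemma Fspace_0: "Fspace 0 = {0}"
  by (auto simp: Fspace_def fun_eq_iff)

lemma Inv_init:
  assumes "n \<ge> 1"
  shows "Inv n (init_state :: 'a::field state)"
  unfolding Inv_def
proof (rule exI[of _ "[]"], intro conjI allI impI)
  show "indep_list ([] @ queue (init_state :: 'a state))"
    by (simp add: init_state_def indep_list_def)
  show "Fspace (arr (init_state :: 'a state)) = range (\<lambda>c. lincomb c ([] @ queue (init_state :: 'a state)))"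
    by (simp add: init_state_def Fspace_0 range_Nil)
  fix j
  show "know init_state j = range (\<lambda>c. lincomb c ([] @ map (\<lambda>b. lincomb b (queue (init_state :: 'a state))) (bBj init_state j)))"
    by (simp add: init_state_def know_def fv.span_empty range_Nil)
  show "set (bBj (init_state :: 'a state) j) \<subseteq> Fspace (length (queue (init_state :: 'a state)))"
    by (simp add: init_state_def)
next
  fix b :: "nat \<Rightarrow> 'a"
  assume "\<forall>j<n. b \<in> range (\<lambda>c. lincomb c (bBj init_state j))"
  then have "b \<in> range (\<lambda>c. lincomb c (bBj (init_state :: 'a state) 0))" using assms by auto
  then show "b = 0" by (simp add: init_state_def range_Nil)
qed

lemma Inv_arrive:
  fixes s :: "'a::field state"
  assumes "Inv n s"
  shows "Inv n (arrive a s)"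
proof -
  obtain Dl where I1: "indep_list (Dl @ queue s)"
    and I2: "Fspace (arr s) = range (\<lambda>c. lincomb c (Dl @ queue s))"
    and I3: "\<forall>j<n. know s j = range (\<lambda>c. lincomb c (Dl @ map (\<lambda>b. lincomb b (queue s)) (bBj s j)))"
    and I4: "\<forall>j<n. set (bBj s j) \<subseteq> Fspace (length (queue s))"
    and I5: "\<forall>b. (\<forall>j<n. b \<in> range (\<lambda>c. lincomb c (bBj s j))) \<longrightarrow> b = 0"
    using assms(1) unfolding Inv_def by (elim exE conjE) (rule that; assumption)
  define U :: "(nat \<Rightarrow> 'a) list" where "U = map (\<lambda>k. unitv (arr s + k)) [0..<a]"
  have q: "queue (arrive a s) = queue s @ U" "arr (arrive a s) = arr s + a"
    "bBj (arrive a s) = bBj s" "know (arrive a s) = know s"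
    by (simp_all add: arrive_def U_def know_def fun_eq_iff)
  have J1: "indep_list (Dl @ queue s @ U)"
    using indep_arr[OF I1, of "arr s" a] set_sub_range[of "Dl @ queue s"] I2 unfolding U_def by simp
  have J2: "Fspace (arr s + a) = range (\<lambda>c. lincomb c (Dl @ queue s @ U))"
    using span_arr[OF I2, of a] unfolding U_def by simp
  have mp: "map (\<lambda>b. lincomb b (queue s @ U)) (bBj s j) = map (\<lambda>b. lincomb b (queue s)) (bBj s j)"
    if "j < n" for j
    using I4 that by (auto intro!: map_cong lc_Fspace_append)
  have K3: "\<forall>j<n. know s j = range (\<lambda>c. lincomb c (Dl @ map (\<lambda>b. lincomb b (queue s @ U)) (bBj s j)))"
  proof (intro allI impI)
    fix j assume j: "j < n"
    have "know s j = range (\<lambda>c. lincomb c (Dl @ map (\<lambda>b. lincomb b (queue s)) (bBj s j)))"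
      using I3 j by blast
    then show "know s j = range (\<lambda>c. lincomb c (Dl @ map (\<lambda>b. lincomb b (queue s @ U)) (bBj s j)))"
      by (simp only: mp[OF j])
  qed
  have K4: "\<forall>j<n. set (bBj s j) \<subseteq> Fspace (length (queue s @ U))"
    using I4 Fspace_mono[of "length (queue s)" "length (queue s @ U)"] by auto
  show ?thesis unfolding Inv_def q
    by (rule exI[of _ Dl]) (use J1 J2 K3 K4 I5 in \<open>simp only: append_assoc\<close>)
qed


lemma lc_neg: "lincomb (\<lambda>i. - c i) vs = - lincomb c vs"
  by (simp add: lincomb_def fun_eq_iff sum_negf)

lemma span_insert_cong: "fv.span (A :: (nat \<Rightarrow> 'a::field) set) = fv.span B \<Longrightarrow> fv.span (insert x A) = fv.span (insert x B)"
proof -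
  have h: "insert x C \<subseteq> fv.span (insert x D)" if "fv.span C = fv.span D" for C D :: "(nat \<Rightarrow> 'a) set"
  proof -
    have "C \<subseteq> fv.span D" using fv.span_superset[of C] that by simp
    also have "\<dots> \<subseteq> fv.span (insert x D)" by (rule fv.span_mono) blast
    finally show ?thesis using fv.span_superset[of "insert x D"] by blast
  qed
  assume eq: "fv.span A = fv.span B"
  show ?thesis
    by (rule iffD2[OF fv.span_eq]) (use h[OF eq] h[OF eq[symmetric]] in blast)
qed

lemma G2:
  assumes "range (\<lambda>c. lincomb c ws) = range (\<lambda>c. lincomb c vs)"
  shows "range (\<lambda>c. lincomb c (Dl @ map (\<lambda>b. lincomb b Q) ws))
          = range (\<lambda>c. lincomb c (Dl @ map (\<lambda>b. lincomb b Q) vs))"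
  using G[of ws vs Dl Q] G[of vs ws Dl Q] assms by auto

lemma Inv_slot:
  assumes "Inv n s" "n \<ge> 1" "bB s = map unitv [0..<length (queue s)]" "slot_rest n s s'"
  shows "Inv n s'"
proof -
  obtain Dl where I1: "indep_list (Dl @ queue s)"
    and I2: "Fspace (arr s) = range (\<lambda>c. lincomb c (Dl @ queue s))"
    and I3: "\<forall>j<n. know s j = range (\<lambda>c. lincomb c (Dl @ map (\<lambda>b. lincomb b (queue s)) (bBj s j)))"
    and I4: "\<forall>j<n. set (bBj s j) \<subseteq> Fspace (length (queue s))"
    using assms(1) unfolding Inv_def by (elim exE conjE) (rule that; assumption)
  define Q where "Q = queue s"
  define L where "L = (\<lambda>b. lincomb b Q)"
  define m where "m = length Q"
  from assms(4) obtain g R bD bpp bjpp X where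
    rest: "let Bj1 = (\<lambda>j. if g \<noteq> 0 \<and> j \<in> R then bBj s j @ [g] else bBj s j);
           rcv1 = (\<lambda>j. if g \<noteq> 0 \<and> j \<in> R then insert (lincomb g (queue s)) (rcv s j)
                        else rcv s j)
       in distinct bD \<and> fv.independent (set bD) \<and>
          fv.span (set bD) = (\<Inter>j<n. fv.span (set (Bj1 j))) \<and>
          distinct (bD @ bpp) \<and> fv.independent (set (bD @ bpp)) \<and>
          fv.span (set (bD @ bpp)) = fv.span (set (bB s)) \<and>
          (\<forall>j<n. distinct (bD @ bjpp j) \<and> fv.independent (set (bD @ bjpp j)) \<and>
                 fv.span (set (bD @ bjpp j)) = fv.span (set (Bj1 j)) \<and>
                 set (bjpp j) \<subseteq> fv.span (set bpp) \<and>
                 map (\<lambda>x. lincomb x bpp) (X j) = bjpp j \<and>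
                 (\<forall>x\<in>set (X j). x \<in> Fspace (length bpp))) \<and>
          s' = s\<lparr> queue := map (\<lambda>h. lincomb h (queue s)) bpp,
                  bB := map unitv [0..<length bpp],
                  bBj := X,
                  rcv := rcv1 \<rparr>"
    unfolding slot_rest_def by (elim exE conjE) (rule that; assumption)
  define Bj1 where "Bj1 = (\<lambda>j. if g \<noteq> 0 \<and> j \<in> R then bBj s j @ [g] else bBj s j)"
  define rcv1 where "rcv1 = (\<lambda>j. if g \<noteq> 0 \<and> j \<in> R then insert (lincomb g (queue s)) (rcv s j)
                        else rcv s j)"
  have rest2: "distinct bD \<and> fv.independent (set bD) \<and>
          fv.span (set bD) = (\<Inter>j<n. fv.span (set (Bj1 j))) \<and>
          distinct (bD @ bpp) \<and> fv.independent (set (bD @ bpp)) \<and>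
          fv.span (set (bD @ bpp)) = fv.span (set (bB s)) \<and>
          (\<forall>j<n. distinct (bD @ bjpp j) \<and> fv.independent (set (bD @ bjpp j)) \<and>
                 fv.span (set (bD @ bjpp j)) = fv.span (set (Bj1 j)) \<and>
                 set (bjpp j) \<subseteq> fv.span (set bpp) \<and>
                 map (\<lambda>x. lincomb x bpp) (X j) = bjpp j \<and>
                 (\<forall>x\<in>set (X j). x \<in> Fspace (length bpp))) \<and>
          s' = s\<lparr> queue := map (\<lambda>h. lincomb h (queue s)) bpp,
                  bB := map unitv [0..<length bpp],
                  bBj := X,
                  rcv := rcv1 \<rparr>"
    using rest[folded Bj1_def rcv1_def, unfolded Let_def] .
  have F1: "fv.span (set bD) = (\<Inter>j<n. fv.span (set (Bj1 j)))" using rest2 by (elim conjE)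
  have F2: "distinct (bD @ bpp) \<and> fv.independent (set (bD @ bpp))" using rest2 by (elim conjE) (intro conjI)
  have F3: "fv.span (set (bD @ bpp)) = fv.span (set (bB s))" using rest2 by (elim conjE)
  have F4: "\<forall>j<n. distinct (bD @ bjpp j) \<and> fv.independent (set (bD @ bjpp j)) \<and>
                 fv.span (set (bD @ bjpp j)) = fv.span (set (Bj1 j)) \<and>
                 set (bjpp j) \<subseteq> fv.span (set bpp) \<and>
                 map (\<lambda>x. lincomb x bpp) (X j) = bjpp j \<and>
                 (\<forall>x\<in>set (X j). x \<in> Fspace (length bpp))" using rest2 by (elim conjE)
  have F5: "s' = s\<lparr> queue := map (\<lambda>h. lincomb h (queue s)) bpp,
                  bB := map unitv [0..<length bpp],
                  bBj := X,
                  rcv := rcv1 \<rparr>" using rest2 by (elim conjE)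
  have D1: "indep_list (bD @ bpp)" using F2 indep_iff by blast
  have D2: "range (\<lambda>c. lincomb c (bD @ bpp)) = Fspace m"
    using F3 assms(3) unfolding span_set Fspace_units m_def Q_def by simp
  have D3: "set (bD @ bpp) \<subseteq> Fspace m" using D2 set_sub_range by blast
  have D4: "\<forall>j<n. range (\<lambda>c. lincomb c (bD @ bjpp j)) = range (\<lambda>c. lincomb c (Bj1 j))"
    using F4 unfolding span_set by blast
  have D5: "range (\<lambda>c. lincomb c bD) = (\<Inter>j<n. range (\<lambda>c. lincomb c (Bj1 j)))"
    using F1 unfolding span_set by blast
  have D6: "\<forall>j<n. map (\<lambda>x. lincomb x bpp) (X j) = bjpp j \<and> set (X j) \<subseteq> Fspace (length bpp)"
    using F4 by blast
  have s': "queue s' = map L bpp" "arr s' = arr s" "bBj s' = X" "rcv s' = rcv1"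
    using F5 by (simp_all add: L_def Q_def)
  define Dl' where "Dl' = Dl @ map L bD"
  have cat: "Dl' @ queue s' = Dl @ map L (bD @ bpp)" by (simp add: Dl'_def s')
  have J1: "indep_list (Dl' @ queue s')"
    unfolding cat L_def using indep_ext[OF I1[folded Q_def] D3[unfolded m_def] D1] .
  have J2: "Fspace (arr s') = range (\<lambda>c. lincomb c (Dl' @ queue s'))"
  proof -
    have mu: "map L (map unitv [0..<m]) = Q" unfolding L_def m_def by (rule map_L_units)
    have "Fspace (arr s') = range (\<lambda>c. lincomb c (Dl @ map L (map unitv [0..<m])))"
      unfolding mu s'(2) I2 Q_def ..
    also have "\<dots> = range (\<lambda>c. lincomb c (Dl @ map L (bD @ bpp)))"
      unfolding L_def by (rule G2) (simp add: D2 Fspace_units[symmetric])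
    finally show ?thesis by (simp add: cat)
  qed
  have J3: "\<forall>j<n. know s' j = range (\<lambda>c. lincomb c (Dl' @ map (\<lambda>b. lincomb b (queue s')) (bBj s' j)))"
  proof (intro allI impI)
    fix j assume j: "j < n"
    have "map (\<lambda>b. lincomb b (queue s')) (bBj s' j) = map L (bjpp j)"
    proof -
      have "bjpp j = map (\<lambda>x. lincomb x bpp) (X j)" using D6 j by simp
      then show ?thesis by (simp add: s' L_def lc_map)
    qed
    then have eqD: "Dl' @ map (\<lambda>b. lincomb b (queue s')) (bBj s' j) = Dl @ map L (bD @ bjpp j)"
      by (simp add: Dl'_def)
    have D4j: "range (\<lambda>c. lincomb c (bD @ bjpp j)) = range (\<lambda>c. lincomb c (Bj1 j))" using D4 j by blast
    have r: "range (\<lambda>c. lincomb c (Dl' @ map (\<lambda>b. lincomb b (queue s')) (bBj s' j)))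
        = range (\<lambda>c. lincomb c (Dl @ map L (Bj1 j)))"
      unfolding eqD L_def by (rule G2[OF D4j])
    have k: "know s j = fv.span (set (Dl @ map L (bBj s j)))"
      using I3 j unfolding span_set L_def Q_def by simp
    have "know s' j = fv.span (set (Dl @ map L (Bj1 j)))"
    proof (cases "g \<noteq> 0 \<and> j \<in> R")
      case True
      then have "know s' j = fv.span (insert (L g) (rcv s j))"
        by (simp add: know_def s' rcv1_def L_def Q_def)
      also have "\<dots> = fv.span (insert (L g) (set (Dl @ map L (bBj s j))))"
        by (rule span_insert_cong) (use k in \<open>simp add: know_def\<close>)
      also have "insert (L g) (set (Dl @ map L (bBj s j))) = set (Dl @ map L (Bj1 j))"
        using True by (auto simp: Bj1_def)
      finally show ?thesis .
    next
      case False
      then have e1: "rcv1 j = rcv s j" and e2: "Bj1 j = bBj s j" unfolding rcv1_def Bj1_def by auto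
      show ?thesis using k unfolding know_def s'(4) e1 e2 .
    qed
    then show "know s' j = range (\<lambda>c. lincomb c (Dl' @ map (\<lambda>b. lincomb b (queue s')) (bBj s' j)))"
      using r unfolding span_set by simp
  qed
  have J4: "\<forall>j<n. set (bBj s' j) \<subseteq> Fspace (length (queue s'))"
    using D6 by (simp add: s')
  have J5: "\<forall>b. (\<forall>j<n. b \<in> range (\<lambda>c. lincomb c (bBj s' j))) \<longrightarrow> b = 0"
  proof (intro allI impI)
    fix b assume b: "\<forall>j<n. b \<in> range (\<lambda>c. lincomb c (bBj s' j))"
    define w where "w = lincomb b bpp"
    have "\<forall>j<n. w \<in> range (\<lambda>c. lincomb c (Bj1 j))"
    proof (intro allI impI)
      fix j assume j: "j < n"
      from b j obtain e where e: "b = lincomb e (X j)" by (auto simp: s')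
      have "w = lincomb e (bjpp j)" using D6 j by (simp add: w_def e lc_map[symmetric])
      also have "\<dots> = lincomb (joinc (length bD) (\<lambda>i. 0) e) (bD @ bjpp j)"
        by (simp add: lc_join lc_zero)
      finally show "w \<in> range (\<lambda>c. lincomb c (Bj1 j))" using D4 j by blast
    qed
    then have "w \<in> range (\<lambda>c. lincomb c bD)" unfolding D5 by blast
    then obtain c1 where c1: "w = lincomb c1 bD" by blast
    have "lincomb (joinc (length bD) c1 (\<lambda>i. - b i)) (bD @ bpp) = 0"
      by (simp add: lc_join lc_neg c1[symmetric] w_def)
    then have z: "\<forall>i<length bD + length bpp. joinc (length bD) c1 (\<lambda>i. - b i) i = 0"
      using D1 unfolding indep_list_def by auto
    from b assms(2) obtain e where e: "b = lincomb e (X 0)" by (auto simp: s')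
    have X0: "set (X 0) \<subseteq> Fspace (length bpp)" using D6 assms(2) by simp
    have bF: "b \<in> Fspace (length bpp)" unfolding e by (rule Fspace_lc[OF X0])
    show "b = 0"
    proof (rule ext)
      fix i show "b i = 0 i"
      proof (cases "i < length bpp")
        case True then show ?thesis using z[rule_format, of "i + length bD"] by (simp add: joinc_def)
      next
        case False then show ?thesis using bF by (simp add: Fspace_def)
      qed
    qed
  qed
  show ?thesis unfolding Inv_def by (rule exI[of _ Dl'], intro conjI J1 J2 J3 J4 J5)
qed

lemma slot_rest_arr: "slot_rest n s s' \<Longrightarrow> arr s' = arr s"
  unfolding slot_rest_def Let_def by auto

theorem theorem4:
  fixes n :: nat and a :: "nat \<Rightarrow> nat" and s :: "nat \<Rightarrow> 'a::{field,finite} state" and t :: nat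
  assumes "n \<ge> 1" and "card (UNIV :: 'a set) > n"
    and "s 0 = init_state"
    and "\<forall>\<tau><t. slot_rest n (arrive (a \<tau>) (s \<tau>)) (s (Suc \<tau>))"
  shows "length (queue (arrive (a t) (s t))) =
           fv.dim (Fspace (\<Sum>\<tau>\<le>t. a \<tau>) :: (nat \<Rightarrow> 'a) set) -
           fv.dim (\<Inter>j<n. know (arrive (a t) (s t)) j)"
proof -
  have bBa: "bB (arrive x y) = map unitv [0..<length (queue (arrive x y))]" for x y
    by (simp add: arrive_def)
  have arra: "arr (arrive x y) = arr y + x" for x y
    by (simp add: arrive_def)
  have inv: "\<tau> \<le> t \<longrightarrow> Inv n (s \<tau>) \<and> arr (s \<tau>) = (\<Sum>i<\<tau>. a i)" for \<tau>
  proof (induction \<tau>)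
    case 0
    have "Inv n (s 0)" unfolding assms(3) by (rule Inv_init[OF assms(1)])
    moreover have "arr (s 0) = 0" unfolding assms(3) init_state_def by simp
    ultimately show ?case by simp
  next
    case (Suc \<tau>)
    show ?case
    proof
      assume "Suc \<tau> \<le> t"
      then have lt: "\<tau> < t" by simp
      then have IH1: "Inv n (s \<tau>)" and IH2: "arr (s \<tau>) = (\<Sum>i<\<tau>. a i)" using Suc.IH by auto
      have sr: "slot_rest n (arrive (a \<tau>) (s \<tau>)) (s (Suc \<tau>))" using assms(4) lt by blast
      have "Inv n (s (Suc \<tau>))"
        by (rule Inv_slot[OF Inv_arrive[OF IH1] assms(1) bBa sr])
      moreover have "arr (s (Suc \<tau>)) = (\<Sum>i<Suc \<tau>. a i)"
        unfolding slot_rest_arr[OF sr] arra IH2 by simp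
      ultimately show "Inv n (s (Suc \<tau>)) \<and> arr (s (Suc \<tau>)) = (\<Sum>i<Suc \<tau>. a i)" by blast
    qed
  qed
  have It: "Inv n (s t)" and ar: "arr (s t) = (\<Sum>i<t. a i)" using inv[of t] by auto
  have I: "Inv n (arrive (a t) (s t))" by (rule Inv_arrive[OF It])
  have A: "arr (arrive (a t) (s t)) = (\<Sum>\<tau>\<le>t. a \<tau>)"
    unfolding arra ar by (simp add: lessThan_Suc_atMost[symmetric])
  have F: "length (queue (arrive (a t) (s t))) = fv.dim (Fspace (arr (arrive (a t) (s t))) :: (nat \<Rightarrow> 'a) set) -
           fv.dim (\<Inter>j<n. know (arrive (a t) (s t)) j)"
    by (rule Inv_final[OF I assms(1)])
  show ?thesis unfolding F A ..
qed

end
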